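(* Let $X,Y$ be separable metric spaces, $\nu$ a locally finite Borel measure on $X$, and $f:X\to Y$ a Borel function with bounded image. Then for $\nu$-a.e. $p\in X$ the following holds: whenever $(B_n)_{n\ge1}$ is a sequence of Borel sets with $\mathrm{diam}(B_n)\to0$, $p\in B_n$ for all $n$, and such that there is $C>0$ with $0<\nu(4B_n)\le C\nu(B_n)$ for all $n$, one has $$\lim_{n\to\infty}\frac1{\nu(B_n)}\int_{B_n}\mathrm{dist}_Y(f(p),f(x))\,d\nu(x)=0.$$
   Context: For $B\subset X$, $4B$ denotes the open neighbourhood $\{x:\mathrm{dist}(x,B)<1.5\,\mathrm{diam}(B)\}$. *)

theory Defs
  imports "HOL-Analysis.Analysis"
begin

text \<open>Diameter with values in [0,\<infinity>] (infinite for unbounded sets, 0 for the empty set).\<close>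
definition diamE :: "'a::metric_space set \<Rightarrow> ennreal" where
  "diamE B = (SUP x\<in>B. SUP y\<in>B. ennreal (dist x y))"

definition enlarge4 :: "'a::metric_space set \<Rightarrow> 'a set" where
  "enlarge4 B = {x. ennreal (infdist x B) < ennreal (3/2) * diamE B}"

definition locally_finite_measure :: "'a::topological_space measure \<Rightarrow> bool" where
  "locally_finite_measure M \<longleftrightarrow>
     (\<forall>x. \<exists>U. open U \<and> x \<in> U \<and> emeasure M U < \<infinity>)"

end

theory Submission
  imports Defs
begin


lemma open_approx_open:
  fixes N :: "'a::metric_space measure"
  assumes "finite_measure N" and sN: "sets N = sets borel" and "open S" and "e > 0"
  shows "\<exists>F. closed F \<and> F \<subseteq> S \<and> measure N (S - F) < e"
proof (cases "S = UNIV")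
  case True
  then show ?thesis using \<open>e>0\<close> by (intro exI[of _ UNIV]) auto
next
  case False
  interpret finite_measure N by fact
  define F where "F n = {x. 1/(real n+1) \<le> infdist x (-S)}" for n
  have clF: "closed (F n)" for n unfolding F_def
    by (intro closed_Collect_le continuous_intros continuous_on_infdist) auto
  have FS: "F n \<subseteq> S" for n
  proof
    fix x assume "x \<in> F n"
    then have "0 < infdist x (-S)" unfolding F_def
      by (smt (verit) divide_pos_pos mem_Collect_eq of_nat_less_0_iff)
    then show "x \<in> S" by (metis ComplI infdist_zero less_irrefl)
  qed
  have UF: "(\<Union>n. F n) = S"
  proof (intro antisym)
    show "(\<Union>n. F n) \<subseteq> S" using FS by auto
    show "S \<subseteq> (\<Union>n. F n)"
    proof
      fix x assume "x \<in> S"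
      then have "0 < infdist x (-S)" using False \<open>open S\<close>
        by (intro infdist_pos_not_in_closed) auto
      then obtain n where "1/(real n + 1) < infdist x (-S)"
        by (metis nat_approx_posE of_nat_Suc add.commute)
      then show "x \<in> (\<Union>n. F n)" unfolding F_def by (auto intro!: exI[of _ n] less_imp_le)
    qed
  qed
  have inc: "incseq F" unfolding incseq_def F_def
  proof (intro allI impI subsetI)
    fix m n :: nat and x assume "m \<le> n" "x \<in> {x. 1/(real m+1) \<le> infdist x (-S)}"
    moreover have "1/(real n+1) \<le> 1/(real m+1)" using \<open>m \<le> n\<close> by (simp add: frac_le)
    ultimately show "x \<in> {x. 1/(real n+1) \<le> infdist x (-S)}" by auto
  qed
  have meas: "range F \<subseteq> sets N" using clF sN by auto
  have "(\<lambda>n. measure N (F n)) \<longlonglongrightarrow> measure N S"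
    using finite_Lim_measure_incseq[OF meas inc] UF by simp
  then have "eventually (\<lambda>n. measure N S - measure N (F n) < e) sequentially"
    using \<open>e > 0\<close> by (simp add: LIMSEQ_iff, metis abs_minus_commute abs_less_iff eventually_sequentially)
  then obtain n where "measure N S - measure N (F n) < e" by (meson eventually_sequentially order_refl)
  moreover have "measure N (S - F n) = measure N S - measure N (F n)"
    using FS meas sN \<open>open S\<close> by (intro finite_measure_Diff) auto
  ultimately show ?thesis using clF[of n] FS[of n] by (intro exI[of _ "F n"]) simp
qed

lemma regularity:
  fixes N :: "'a::metric_space measure"
  assumes fm: "finite_measure N" and sN: "sets N = sets borel" and A: "A \<in> sets borel"
  shows "\<forall>e>0. (\<exists>U. open U \<and> A \<subseteq> U \<and> measure N (U - A) < e) \<and>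
                 (\<exists>F. closed F \<and> F \<subseteq> A \<and> measure N (A - F) < e)"
proof -
  interpret finite_measure N by fact
  have "A \<in> sigma_sets UNIV {S. open S}" using A by (simp add: sets_borel)
  then show ?thesis
  proof (induction rule: sigma_sets.induct)
    case (Basic S)
    then have "open S" by simp
    then show ?case using open_approx_open[OF fm sN] by (metis Diff_cancel measure_empty order_refl)
  next
    case Empty
    show ?case by (intro allI impI conjI exI[of _ "{}"]) auto
  next
    case (Compl a)
    have am: "a \<in> sets N" using Compl(1) sN by (simp add: sets_borel)
    show ?case
    proof (intro allI impI conjI)
      fix e :: real assume "e > 0"
      then obtain F where F: "closed F" "F \<subseteq> a" "measure N (a - F) < e" using Compl(2) by blast
      moreover have "UNIV - F - (UNIV - a) = a - F" by blast
      ultimately show "\<exists>U. open U \<and> UNIV - a \<subseteq> U \<and> measure N (U - (UNIV - a)) < e"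
        by (intro exI[of _ "UNIV - F"]) (auto simp: open_Diff)
      obtain U where U: "open U" "a \<subseteq> U" "measure N (U - a) < e" using Compl(2) \<open>e>0\<close> by blast
      moreover have "UNIV - a - (UNIV - U) = U - a" by blast
      ultimately show "\<exists>F. closed F \<and> F \<subseteq> UNIV - a \<and> measure N (UNIV - a - F) < e"
        by (intro exI[of _ "UNIV - U"]) (auto simp: closed_Diff)
    qed
  next
    case (Union A)
    have Am: "A i \<in> sets N" for i using Union(1) sN by (simp add: sets_borel)
    show ?case
    proof (intro allI impI conjI)
      fix e :: real assume "e > 0"
      have "\<forall>i. \<exists>U. open U \<and> A i \<subseteq> U \<and> measure N (U - A i) < (e/2) * (1/2)^Suc i"
      proof
        fix i have "(e/2) * (1/2::real)^Suc i > 0" using \<open>e>0\<close> by simp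
        then show "\<exists>U. open U \<and> A i \<subseteq> U \<and> measure N (U - A i) < (e/2) * (1/2)^Suc i"
          using Union(2)[of i] by blast
      qed
      then obtain U where U: "\<And>i. open (U i)" "\<And>i. A i \<subseteq> U i"
          "\<And>i. measure N (U i - A i) < (e/2) * (1/2)^Suc i"
        by metis
      have Um: "U i - A i \<in> sets N" for i using U(1) Am sN
        by (metis borel_open sets.Diff)
      have sm: "(\<lambda>i. (e/2) * (1/2::real)^Suc i) sums (e/2)"
        using sums_mult[OF power_half_series, of "e/2"] by simp
      have summ: "summable (\<lambda>i. measure N (U i - A i))"
        by (rule summable_comparison_test'[OF sums_summable[OF sm], of 0])
           (use U(3) in \<open>auto intro: less_imp_le\<close>)
      have "measure N ((\<Union>i. U i) - (\<Union>i. A i)) \<le> measure N (\<Union>i. U i - A i)"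
        using Um by (intro finite_measure_mono) auto
      also have "\<dots> \<le> (\<Sum>i. measure N (U i - A i))"
        using Um summ by (intro finite_measure_subadditive_countably) auto
      also have "\<dots> \<le> (\<Sum>i. (e/2) * (1/2::real)^Suc i)"
        using summ sums_summable[OF sm] U(3) by (intro suminf_le) (auto intro: less_imp_le)
      also have "\<dots> = e/2" using sm sums_unique by metis
      also have "\<dots> < e" using \<open>e>0\<close> by simp
      finally show "\<exists>V. open V \<and> (\<Union>i. A i) \<subseteq> V \<and> measure N (V - (\<Union>i. A i)) < e"
        using U by (intro exI[of _ "\<Union>i. U i"]) auto
    next
      fix e :: real assume "e > 0"
      define Aun where "Aun n = (\<Union>i<n. A i)" for n
      have Aunm: "range Aun \<subseteq> sets N" using Am unfolding Aun_def by auto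
      have inc: "incseq Aun" unfolding Aun_def incseq_def
        by (auto, metis lessThan_iff order_less_le_trans)
      have UA: "(\<Union>n. Aun n) = (\<Union>i. A i)" unfolding Aun_def by auto
      have "(\<lambda>n. measure N (Aun n)) \<longlonglongrightarrow> measure N (\<Union>i. A i)"
        using finite_Lim_measure_incseq[OF Aunm inc] UA by simp
      then have "eventually (\<lambda>n. \<bar>measure N (Aun n) - measure N (\<Union>i. A i)\<bar> < e/2) sequentially"
        using \<open>e>0\<close> unfolding LIMSEQ_iff eventually_sequentially dist_real_def
        by (metis half_gt_zero real_norm_def)
      then obtain n where n: "\<bar>measure N (Aun n) - measure N (\<Union>i. A i)\<bar> < e/2"
        by (meson eventually_sequentially order_refl)
      have "\<forall>i. \<exists>F. closed F \<and> F \<subseteq> A i \<and> measure N (A i - F) < e/(2*(real n+1))"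
      proof
        fix i have "e/(2*(real n+1)) > 0" using \<open>e>0\<close> by simp
        then show "\<exists>F. closed F \<and> F \<subseteq> A i \<and> measure N (A i - F) < e/(2*(real n+1))"
          using Union(2)[of i] by blast
      qed
      then obtain F where F: "\<And>i. closed (F i)" "\<And>i. F i \<subseteq> A i"
          "\<And>i. measure N (A i - F i) < e/(2*(real n+1))"
        by metis
      have Fm: "A i - F i \<in> sets N" for i using F(1) Am sN
        by (metis borel_closed sets.Diff)
      have sub: "(\<Union>i. A i) - (\<Union>i<n. F i) \<subseteq> ((\<Union>i. A i) - Aun n) \<union> (\<Union>i<n. A i - F i)"
        unfolding Aun_def by auto
      have m1: "(\<Union>i. A i) - Aun n \<in> sets N" using Am Aunm by auto
      have m2: "(\<Union>i<n. A i - F i) \<in> sets N" using Fm by auto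
      have "measure N ((\<Union>i. A i) - (\<Union>i<n. F i)) \<le> measure N (((\<Union>i. A i) - Aun n) \<union> (\<Union>i<n. A i - F i))"
        using m1 m2 sub by (intro finite_measure_mono) auto
      also have "\<dots> \<le> measure N ((\<Union>i. A i) - Aun n) + measure N (\<Union>i<n. A i - F i)"
        using m1 m2 by (intro measure_subadditive) auto
      also have "measure N ((\<Union>i. A i) - Aun n) = measure N (\<Union>i. A i) - measure N (Aun n)"
        using Am Aunm by (intro finite_measure_Diff) (auto simp: Aun_def)
      also have "measure N (\<Union>i<n. A i - F i) \<le> (\<Sum>i<n. measure N (A i - F i))"
        using Fm by (intro finite_measure_subadditive_finite) auto
      also have "\<dots> \<le> (\<Sum>i<n. e/(2*(real n+1)))"
        using F(3) by (intro sum_mono less_imp_le) auto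
      also have "\<dots> = real n * e / (2*(real n+1))" by simp
      also have "\<dots> < e/2" using \<open>e>0\<close> by (simp add: field_simps)
      finally have "measure N ((\<Union>i. A i) - (\<Union>i<n. F i)) < e" using n by linarith
      moreover have "closed (\<Union>i<n. F i)" using F(1) by (intro closed_UN) auto
      ultimately show "\<exists>F. closed F \<and> F \<subseteq> (\<Union>i. A i) \<and> measure N ((\<Union>i. A i) - F) < e"
        using F(2) by (intro exI[of _ "\<Union>i<n. F i"]) auto
    qed
  qed
qed

lemma reg_local:
  fixes M :: "'a::metric_space measure"
  assumes sM: "sets M = sets borel" and W: "open W" "emeasure M W < \<infinity>"
    and A: "A \<in> sets borel" and e: "e > 0"
  shows "\<exists>V. open V \<and> A \<inter> W \<subseteq> V \<and> V \<subseteq> W \<and> emeasure M (V - A) < ennreal e"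
proof -
  define N where "N = density M (indicator W)"
  have Wm: "W \<in> sets M" using W sM by auto
  have sN: "sets N = sets borel" unfolding N_def using sM by simp
  have eN: "emeasure N X = emeasure M (X \<inter> W)" if "X \<in> sets M" for X
  proof -
    have "emeasure N X = (\<integral>\<^sup>+ a. indicator W a * indicator X a \<partial>M)"
      unfolding N_def using Wm that by (intro emeasure_density) auto
    also have "\<dots> = (\<integral>\<^sup>+ a. indicator (X \<inter> W) a \<partial>M)"
      by (intro nn_integral_cong) (auto split: split_indicator)
    also have "\<dots> = emeasure M (X \<inter> W)" using Wm that by (intro nn_integral_indicator) auto
    finally show ?thesis .
  qed
  have spN: "space N = UNIV" using sN by (metis sets_eq_imp_space_eq space_borel)
  have "emeasure N (space N) = emeasure M W" using eN[of UNIV] spN sM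
    by (metis Int_UNIV_left sets.top space_borel sets_eq_imp_space_eq)
  then have fm: "finite_measure N" using W by (intro finite_measureI) auto
  have AW: "A \<inter> W \<in> sets borel" using A W by auto
  obtain U where U: "open U" "A \<inter> W \<subseteq> U" "measure N (U - A \<inter> W) < e"
    using regularity[OF fm sN AW] e by blast
  have m: "U - A \<inter> W \<in> sets M" using U(1) AW sM by auto
  have "emeasure M (U \<inter> W - A) = emeasure M ((U - A \<inter> W) \<inter> W)"
    by (intro arg_cong[where f="emeasure M"]) auto
  also have "\<dots> = emeasure N (U - A \<inter> W)" using eN[OF m] by simp
  also have "\<dots> = ennreal (measure N (U - A \<inter> W))"
    using fm finite_measure.emeasure_eq_measure by blast
  also have "\<dots> < ennreal e" using U(3) e by (simp add: ennreal_lessI)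
  finally show ?thesis using U W by (intro exI[of _ "U \<inter> W"]) auto
qed



lemma diamE_le: "x \<in> B \<Longrightarrow> y \<in> B \<Longrightarrow> ennreal (dist x y) \<le> diamE B"
  unfolding diamE_def by (meson SUP_upper order_trans)

lemma diamE_empty: "diamE {} = 0"
  unfolding diamE_def by (simp add: bot_ennreal)

lemma open_enlarge4: "open (enlarge4 (B::'a::metric_space set))"
proof (cases "diamE B = top")
  case True
  then have "enlarge4 B = UNIV" unfolding enlarge4_def by (auto simp: ennreal_mult_top)
  then show ?thesis by simp
next
  case False
  then obtain d where d: "diamE B = ennreal d" "0 \<le> d" by (cases "diamE B") auto
  have "enlarge4 B = {x. infdist x B < 3/2 * d}"
    unfolding enlarge4_def d using d(2)
    by (auto simp: ennreal_mult[symmetric] ennreal_less_iff infdist_nonneg)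
  also have "open \<dots>" by (intro open_Collect_less continuous_intros continuous_on_infdist) auto
  finally show ?thesis .
qed

lemma enlarge4_diam_pos: "enlarge4 B \<noteq> {} \<Longrightarrow> 0 < diamE B"
proof -
  assume "enlarge4 B \<noteq> {}"
  then obtain x where "ennreal (infdist x B) < ennreal (3/2) * diamE B" unfolding enlarge4_def by auto
  then have "diamE B \<noteq> 0" by auto
  then show ?thesis by (metis not_gr_zero)
qed

lemma subset_enlarge4:
  assumes "B \<inter> B' \<noteq> {}" "diamE B < ennreal (3/2) * diamE B'"
  shows "B \<subseteq> enlarge4 B'"
proof
  fix x assume x: "x \<in> B"
  obtain z where z: "z \<in> B" "z \<in> B'" using assms(1) by auto
  have "ennreal (infdist x B') \<le> ennreal (dist x z)" using z(2) by (intro ennreal_leI infdist_le)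
  also have "\<dots> \<le> diamE B" using x z(1) by (rule diamE_le)
  also have "\<dots> < ennreal (3/2) * diamE B'" by fact
  finally show "x \<in> enlarge4 B'" unfolding enlarge4_def by simp
qed

lemma covering:
  fixes F :: "'a::metric_space set set"
  assumes F: "\<And>B. B \<in> F \<Longrightarrow> 0 < diamE B \<and> diamE B \<le> 1"
  shows "\<exists>G \<subseteq> F. disjoint G \<and> (\<forall>B\<in>F. \<exists>B'\<in>G. B \<subseteq> enlarge4 B')"
proof -
  define P where "P = {G. G \<subseteq> F \<and> disjoint G \<and> (\<forall>B\<in>F. (\<exists>B'\<in>G. B \<inter> B' \<noteq> {}) \<longrightarrow>
     (\<exists>B'\<in>G. B \<inter> B' \<noteq> {} \<and> diamE B < ennreal (3/2) * diamE B'))}"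
  have "\<forall>C\<in>chains P. \<Union>C \<in> P"
  proof
    fix C assume C: "C \<in> chains P"
    have CP: "C \<subseteq> P" and ch: "\<And>X Y. X \<in> C \<Longrightarrow> Y \<in> C \<Longrightarrow> X \<subseteq> Y \<or> Y \<subseteq> X"
      using C unfolding chains_def chain_subset_def by auto
    have sub: "\<Union>C \<subseteq> F" using CP unfolding P_def by blast
    have disj: "disjoint (\<Union>C)"
    proof (rule pairwiseI)
      fix X Y assume "X \<in> \<Union>C" "Y \<in> \<Union>C" "X \<noteq> Y"
      then obtain G1 G2 where G: "G1\<in>C" "G2\<in>C" "X\<in>G1" "Y\<in>G2" by auto
      then have "G1 \<subseteq> G2 \<or> G2 \<subseteq> G1" using ch by blast
      moreover have "disjoint G1" "disjoint G2" using G CP unfolding P_def by auto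
      ultimately show "disjnt X Y" using G \<open>X \<noteq> Y\<close> by (meson pairwiseD subsetD)
    qed
    have prp: "\<forall>B\<in>F. (\<exists>B'\<in>\<Union>C. B \<inter> B' \<noteq> {}) \<longrightarrow>
       (\<exists>B'\<in>\<Union>C. B \<inter> B' \<noteq> {} \<and> diamE B < ennreal (3/2) * diamE B')"
    proof (intro ballI impI)
      fix B assume "B \<in> F" "\<exists>B'\<in>\<Union>C. B \<inter> B' \<noteq> {}"
      then obtain G B' where "G \<in> C" "B' \<in> G" "B \<inter> B' \<noteq> {}" by auto
      then have "G \<in> P" using CP by auto
      then obtain B'' where "B'' \<in> G" "B \<inter> B'' \<noteq> {} \<and> diamE B < ennreal (3/2) * diamE B''"
        using \<open>B \<in> F\<close> \<open>B' \<in> G\<close> \<open>B \<inter> B' \<noteq> {}\<close> unfolding P_def by blast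
      then show "\<exists>B'\<in>\<Union>C. B \<inter> B' \<noteq> {} \<and> diamE B < ennreal (3/2) * diamE B'"
        using \<open>G \<in> C\<close> by blast
    qed
    show "\<Union>C \<in> P" unfolding P_def using sub disj prp by blast
  qed
  then obtain Gm where Gm: "Gm \<in> P" and max: "\<forall>X\<in>P. Gm \<subseteq> X \<longrightarrow> X = Gm"
    using Zorn_Lemma[of P] by blast
  have GmF: "Gm \<subseteq> F" and Gmd: "disjoint Gm" and Gmp: "\<forall>B\<in>F. (\<exists>B'\<in>Gm. B \<inter> B' \<noteq> {}) \<longrightarrow>
     (\<exists>B'\<in>Gm. B \<inter> B' \<noteq> {} \<and> diamE B < ennreal (3/2) * diamE B')"
    using Gm unfolding P_def by auto
  have cov: "\<forall>B\<in>F. \<exists>B'\<in>Gm. B \<inter> B' \<noteq> {}"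
  proof (rule ccontr)
    assume nc: "\<not> (\<forall>B\<in>F. \<exists>B'\<in>Gm. B \<inter> B' \<noteq> {})"
    define R where "R = {B\<in>F. \<forall>B'\<in>Gm. B \<inter> B' = {}}"
    obtain B1 where B1: "B1 \<in> R" using nc unfolding R_def by blast
    define S where "S = (SUP B\<in>R. diamE B)"
    have "diamE B1 \<le> S" unfolding S_def using B1 by (rule SUP_upper)
    moreover have "0 < diamE B1" using B1 F unfolding R_def by auto
    ultimately have S0: "0 < S" by auto
    have S1: "S \<le> 1" unfolding S_def using F unfolding R_def by (auto intro!: SUP_least)
    then obtain s where s: "S = ennreal s" "0 \<le> s" by (cases S) (auto simp: top_unique)
    have s0: "0 < s" using S0 s by simp
    have "ennreal (2/3 * s) < S" using s s0 by (simp add: ennreal_less_iff)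
    then obtain B0 where B0: "B0 \<in> R" "ennreal (2/3 * s) < diamE B0"
      unfolding S_def by (auto simp: less_SUP_iff)
    have "diamE B0 \<le> 1" using B0 F unfolding R_def by auto
    then obtain d0 where d0: "diamE B0 = ennreal d0" "0 \<le> d0" by (cases "diamE B0") (auto simp: top_unique)
    have "2/3 * s < d0" using B0(2) d0 s(2) by (simp add: ennreal_less_iff)
    then have sd: "S < ennreal (3/2) * diamE B0" using s d0
      by (simp add: ennreal_mult[symmetric] ennreal_less_iff)
    have B0ne: "B0 \<noteq> {}" using B0 F unfolding R_def by (auto simp: diamE_empty)
    have B0n: "B0 \<notin> Gm" using B0(1) B0ne unfolding R_def by auto
    have "insert B0 Gm \<in> P"
    proof -
      have "insert B0 Gm \<subseteq> F" using B0 GmF unfolding R_def by auto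
      moreover have "disjoint (insert B0 Gm)"
        using Gmd B0(1) unfolding R_def by (auto simp: pairwise_insert disjnt_def Int_commute)
      moreover have "\<forall>B\<in>F. (\<exists>B'\<in>insert B0 Gm. B \<inter> B' \<noteq> {}) \<longrightarrow>
         (\<exists>B'\<in>insert B0 Gm. B \<inter> B' \<noteq> {} \<and> diamE B < ennreal (3/2) * diamE B')"
      proof (intro ballI impI)
        fix B assume BF: "B \<in> F" and ex: "\<exists>B'\<in>insert B0 Gm. B \<inter> B' \<noteq> {}"
        show "\<exists>B'\<in>insert B0 Gm. B \<inter> B' \<noteq> {} \<and> diamE B < ennreal (3/2) * diamE B'"
        proof (cases "\<exists>B'\<in>Gm. B \<inter> B' \<noteq> {}")
          case True
          then show ?thesis using Gmp BF by blast
        next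
          case False
          then have "B \<in> R" using BF unfolding R_def by auto
          then have "diamE B \<le> S" unfolding S_def by (rule SUP_upper)
          then have "diamE B < ennreal (3/2) * diamE B0" using sd by (rule le_less_trans)
          moreover have "B \<inter> B0 \<noteq> {}" using ex False by auto
          ultimately show ?thesis by blast
        qed
      qed
      ultimately show ?thesis unfolding P_def by blast
    qed
    then have "insert B0 Gm = Gm" using max by blast
    then show False using B0n by blast
  qed
  have "\<forall>B\<in>F. \<exists>B'\<in>Gm. B \<subseteq> enlarge4 B'"
  proof
    fix B assume "B \<in> F"
    then obtain B' where "B' \<in> Gm" "B \<inter> B' \<noteq> {}" "diamE B < ennreal (3/2) * diamE B'"
      using cov Gmp by blast
    then show "\<exists>B'\<in>Gm. B \<subseteq> enlarge4 B'" using subset_enlarge4 by blast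
  qed
  then show ?thesis using GmF Gmd by blast
qed



lemma core:
  fixes M :: "'a::{metric_space,second_countable_topology} measure"
  assumes sM: "sets M = sets borel" and W: "open W" "emeasure M W < \<infinity>"
    and A: "A \<in> sets borel" and e: "e > 0"
  shows "\<exists>Ou. open Ou \<and> {p \<in> A. \<forall>\<delta>>0. \<exists>B. B \<in> sets borel \<and> p \<in> B \<and> diamE B < ennreal \<delta> \<and>
       0 < emeasure M (enlarge4 B) \<and> emeasure M (enlarge4 B) \<le> of_nat K * emeasure M B \<and>
       emeasure M B < of_nat (Suc k) * emeasure M (B - A)} \<inter> W \<subseteq> Ou \<and> emeasure M Ou \<le> ennreal e"
proof -
  define Bad where "Bad = {p \<in> A. \<forall>\<delta>>0. \<exists>B. B \<in> sets borel \<and> p \<in> B \<and> diamE B < ennreal \<delta> \<and>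
       0 < emeasure M (enlarge4 B) \<and> emeasure M (enlarge4 B) \<le> of_nat K * emeasure M B \<and>
       emeasure M B < of_nat (Suc k) * emeasure M (B - A)}"
  define L where "L = K * Suc k"
  define e' where "e' = e / (real L + 1)"
  have e': "e' > 0" using e unfolding e'_def by simp
  obtain V where V: "open V" "A \<inter> W \<subseteq> V" "V \<subseteq> W" "emeasure M (V - A) < ennreal e'"
    using reg_local[OF sM W A e'] by blast
  define F where "F = {B. B \<in> sets borel \<and> B \<subseteq> V \<and> diamE B < 1 \<and> 0 < emeasure M (enlarge4 B) \<and>
       emeasure M (enlarge4 B) \<le> of_nat K * emeasure M B \<and>
       emeasure M B < of_nat (Suc k) * emeasure M (B - A)}"
  have Fd: "0 < diamE B \<and> diamE B \<le> 1" if "B \<in> F" for B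
  proof -
    have "enlarge4 B \<noteq> {}" using that unfolding F_def by auto
    then show ?thesis using that enlarge4_diam_pos unfolding F_def by auto
  qed
  obtain G where G: "G \<subseteq> F" "disjoint G" "\<forall>B\<in>F. \<exists>B'\<in>G. B \<subseteq> enlarge4 B'"
    using covering[of F] Fd by blast
  define Ou where "Ou = \<Union>(enlarge4 ` G)"
  have oO: "open Ou" unfolding Ou_def using open_enlarge4 by blast
  have cov: "Bad \<inter> W \<subseteq> Ou"
  proof
    fix p assume p: "p \<in> Bad \<inter> W"
    then have "p \<in> V" using V(2) unfolding Bad_def by auto
    then obtain \<rho> where \<rho>: "\<rho> > 0" "ball p \<rho> \<subseteq> V" using V(1) openE by blast
    define \<delta> where "\<delta> = min \<rho> 1"
    have "\<delta> > 0" using \<rho> unfolding \<delta>_def by simp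
    then obtain B where B: "B \<in> sets borel" "p \<in> B" "diamE B < ennreal \<delta>"
       "0 < emeasure M (enlarge4 B)" "emeasure M (enlarge4 B) \<le> of_nat K * emeasure M B"
       "emeasure M B < of_nat (Suc k) * emeasure M (B - A)"
      using p unfolding Bad_def by blast
    have "B \<subseteq> ball p \<rho>"
    proof
      fix x assume "x \<in> B"
      then have "ennreal (dist p x) < ennreal \<delta>" using diamE_le[OF B(2)] B(3) le_less_trans by blast
      then have "dist p x < \<delta>" by (simp add: ennreal_less_iff)
      then show "x \<in> ball p \<rho>" unfolding \<delta>_def by simp
    qed
    moreover have "ennreal \<delta> \<le> 1" unfolding \<delta>_def by (metis ennreal_1 ennreal_leI min.cobounded2)
    then have "diamE B < 1" by (rule order_less_le_trans[OF B(3)])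
    ultimately have "B \<in> F" using B \<rho> unfolding F_def by auto
    then obtain B' where "B' \<in> G" "B \<subseteq> enlarge4 B'" using G(3) by blast
    then show "p \<in> Ou" unfolding Ou_def using B(2) by auto
  qed
  have fin: "emeasure M (\<Union>(enlarge4 ` S)) \<le> of_nat L * emeasure M (V - A)" if S: "finite S" "S \<subseteq> G" for S
  proof -
    have SF: "S \<subseteq> F" using S G by auto
    have Sm: "B \<in> sets M" if "B \<in> S" for B using that SF sM unfolding F_def by auto
    have "emeasure M (\<Union>(enlarge4 ` S)) \<le> (\<Sum>B\<in>S. emeasure M (enlarge4 B))"
      using S(1) sM by (intro emeasure_subadditive_finite) (auto intro!: borel_open open_enlarge4)
    also have "\<dots> \<le> (\<Sum>B\<in>S. of_nat K * (of_nat (Suc k) * emeasure M (B - A)))"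
    proof (intro sum_mono)
      fix B assume "B \<in> S"
      then have "emeasure M (enlarge4 B) \<le> of_nat K * emeasure M B"
        "emeasure M B < of_nat (Suc k) * emeasure M (B - A)" using SF unfolding F_def by auto
      then show "emeasure M (enlarge4 B) \<le> of_nat K * (of_nat (Suc k) * emeasure M (B - A))"
        by (meson less_imp_le mult_left_mono order_trans zero_le)
    qed
    also have "\<dots> = of_nat L * (\<Sum>B\<in>S. emeasure M (B - A))"
      unfolding L_def sum_distrib_left by (intro sum.cong refl) (simp only: of_nat_mult mult.assoc)
    also have "(\<Sum>B\<in>S. emeasure M (B - A)) = emeasure M (\<Union>B\<in>S. B - A)"
    proof (rule sum_emeasure)
      show "(\<lambda>B. B - A) ` S \<subseteq> sets M" using Sm A sM by auto
      show "disjoint_family_on (\<lambda>B. B - A) S" unfolding disjoint_family_on_def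
      proof (intro ballI impI)
        fix B1 B2 assume "B1 \<in> S" "B2 \<in> S" "B1 \<noteq> B2"
        then have "disjnt B1 B2" using G(2) S(2) by (meson pairwiseD subsetD)
        then show "(B1 - A) \<inter> (B2 - A) = {}" by (auto simp: disjnt_def)
      qed
    qed fact
    also have "emeasure M (\<Union>B\<in>S. B - A) \<le> emeasure M (V - A)"
      using SF V(1) A sM by (intro emeasure_mono) (auto simp: F_def)
    finally show ?thesis by (simp add: mult_left_mono)
  qed
  have bound: "emeasure M Ou \<le> of_nat L * emeasure M (V - A)"
  proof -
    obtain F' where F': "F' \<subseteq> enlarge4 ` G" "countable F'" "\<Union>F' = Ou"
      using Lindelof[of "enlarge4 ` G"] open_enlarge4 unfolding Ou_def by blast
    then obtain G' where G': "countable G'" "G' \<subseteq> G" "F' = enlarge4 ` G'"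
      using countable_subset_image by metis
    show ?thesis
    proof (cases "G' = {}")
      case True
      then show ?thesis using F' G' by simp
    next
      case False
      define g where "g = from_nat_into G'"
      have rg: "range g = G'" unfolding g_def using False G' by simp
      define On where "On n = \<Union>(enlarge4 ` (g ` {..<n}))" for n
      have "(\<Union>n. On n) = Ou"
      proof -
        have "(\<Union>n. On n) = \<Union>(enlarge4 ` range g)" unfolding On_def by auto
        then show ?thesis using rg F' G' by simp
      qed
      moreover have "range On \<subseteq> sets M" unfolding On_def using sM by (auto intro!: borel_open open_enlarge4)
      moreover have "incseq On" unfolding On_def incseq_def
        by (auto, metis lessThan_iff order_less_le_trans)
      ultimately have "emeasure M Ou = (SUP n. emeasure M (On n))" using SUP_emeasure_incseq by metis
      also have "\<dots> \<le> of_nat L * emeasure M (V - A)"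
        unfolding On_def using rg G' by (intro SUP_least fin) auto
      finally show ?thesis .
    qed
  qed
  also have "\<dots> \<le> of_nat L * ennreal e'" using V(4) by (intro mult_left_mono) auto
  also have "\<dots> = ennreal (real L * e')" using e' by (simp add: ennreal_mult ennreal_of_nat_eq_real_of_nat)
  also have "\<dots> \<le> ennreal e" unfolding e'_def using e by (intro ennreal_leI) (simp add: field_simps)
  finally show ?thesis using oO cov unfolding Bad_def by blast
qed

lemma density:
  fixes M :: "'a::{metric_space,second_countable_topology} measure"
  assumes sM: "sets M = sets borel" and locfin: "locally_finite_measure M" and A: "A \<in> sets borel"
  shows "AE p in M. p \<in> A \<longrightarrow> (\<exists>\<delta>>0. \<forall>B. B \<in> sets borel \<and> p \<in> B \<and> diamE B < ennreal \<delta> \<and>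
       0 < emeasure M (enlarge4 B) \<and> emeasure M (enlarge4 B) \<le> of_nat K * emeasure M B \<longrightarrow>
       of_nat (Suc k) * emeasure M (B - A) \<le> emeasure M B)"
proof -
  define Bad where "Bad = {p \<in> A. \<forall>\<delta>>0. \<exists>B. B \<in> sets borel \<and> p \<in> B \<and> diamE B < ennreal \<delta> \<and>
       0 < emeasure M (enlarge4 B) \<and> emeasure M (enlarge4 B) \<le> of_nat K * emeasure M B \<and>
       emeasure M B < of_nat (Suc k) * emeasure M (B - A)}"
  obtain \<B> :: "'a set set" where \<B>: "countable \<B>" "topological_basis \<B>"
    using ex_countable_basis by blast
  define Wf where "Wf = {b\<in>\<B>. emeasure M b < \<infinity>}"
  have "\<forall>b\<in>Wf. \<forall>m::nat. \<exists>Ou. open Ou \<and> Bad \<inter> b \<subseteq> Ou \<and> emeasure M Ou \<le> ennreal (1/real (Suc m))"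
  proof (intro ballI allI)
    fix b m assume "b \<in> Wf"
    then have "open b" "emeasure M b < \<infinity>" using \<B>(2) topological_basis_open unfolding Wf_def by auto
    then show "\<exists>Ou. open Ou \<and> Bad \<inter> b \<subseteq> Ou \<and> emeasure M Ou \<le> ennreal (1/real (Suc m))"
      using core[OF sM _ _ A, of b "1/real (Suc m)" K k] unfolding Bad_def by simp
  qed
  then obtain Of where Of: "\<And>b m. b \<in> Wf \<Longrightarrow> open (Of b m) \<and> Bad \<inter> b \<subseteq> Of b m \<and>
      emeasure M (Of b m) \<le> ennreal (1/real (Suc m))"
    by metis
  define N where "N = (\<Union>b\<in>Wf. \<Inter>m. Of b m)"
  have "N \<in> null_sets M"
    unfolding N_def
  proof (rule null_sets_UN')
    show "countable Wf" using \<B>(1) unfolding Wf_def by auto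
    fix b assume b: "b \<in> Wf"
    have meas: "(\<Inter>m. Of b m) \<in> sets M" using Of[OF b] sM by auto
    have "emeasure M (\<Inter>m. Of b m) \<le> 0"
    proof (rule ennreal_le_epsilon)
      fix e :: real assume "e > 0"
      then obtain m where m: "1/real (Suc m) < e" using nat_approx_posE by metis
      have "emeasure M (\<Inter>m. Of b m) \<le> emeasure M (Of b m)"
        using Of[OF b] sM by (intro emeasure_mono) auto
      also have "\<dots> \<le> ennreal (1/real (Suc m))" using Of[OF b] by blast
      also have "\<dots> \<le> ennreal e" using m by (intro ennreal_leI) simp
      finally show "emeasure M (\<Inter>m. Of b m) \<le> 0 + ennreal e" by simp
    qed
    then show "(\<Inter>m. Of b m) \<in> null_sets M" using meas by (auto simp: null_sets_def)
  qed
  moreover have "{p \<in> space M. \<not> (p \<in> A \<longrightarrow> (\<exists>\<delta>>0. \<forall>B. B \<in> sets borel \<and> p \<in> B \<and> diamE B < ennreal \<delta> \<and>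
       0 < emeasure M (enlarge4 B) \<and> emeasure M (enlarge4 B) \<le> of_nat K * emeasure M B \<longrightarrow>
       of_nat (Suc k) * emeasure M (B - A) \<le> emeasure M B))} \<subseteq> N"
  proof
    fix p assume p: "p \<in> {p \<in> space M. \<not> (p \<in> A \<longrightarrow> (\<exists>\<delta>>0. \<forall>B. B \<in> sets borel \<and> p \<in> B \<and> diamE B < ennreal \<delta> \<and>
       0 < emeasure M (enlarge4 B) \<and> emeasure M (enlarge4 B) \<le> of_nat K * emeasure M B \<longrightarrow>
       of_nat (Suc k) * emeasure M (B - A) \<le> emeasure M B))}"
    then have pB: "p \<in> Bad" unfolding Bad_def by (auto simp: not_le)
    obtain U where U: "open U" "p \<in> U" "emeasure M U < \<infinity>"
      using locfin unfolding locally_finite_measure_def by blast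
    obtain b where b: "b \<in> \<B>" "p \<in> b" "b \<subseteq> U" using topological_basisE[OF \<B>(2) U(1,2)] by blast
    have "open b" using b \<B>(2) topological_basis_open by auto
    then have "emeasure M b \<le> emeasure M U" using b U sM by (intro emeasure_mono) auto
    then have "b \<in> Wf" using b U unfolding Wf_def by auto
    then have "p \<in> Of b m" for m using Of pB b by blast
    then show "p \<in> N" unfolding N_def using \<open>b \<in> Wf\<close> by blast
  qed
  ultimately show ?thesis by (rule AE_I')
qed



lemma pointwise:
  fixes M :: "'a::{metric_space, second_countable_topology} measure"
    and f :: "'a \<Rightarrow> 'b::{metric_space, second_countable_topology}"
  assumes sM: "sets M = sets borel" and locfin: "locally_finite_measure M"
    and K0: "\<And>x y. dist (f x) (f y) \<le> K0"
    and dd: "\<And>y r. r > 0 \<Longrightarrow> \<exists>i. dist (dd i) y < r"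
    and Afm: "\<And>j i. f -` ball (dd i) (1/real (Suc j)) \<in> sets borel"
    and good: "\<And>j i K k. p \<in> f -` ball (dd i) (1/real (Suc j)) \<longrightarrow> (\<exists>\<delta>>0. \<forall>B. B \<in> sets borel \<and> p \<in> B \<and> diamE B < ennreal \<delta> \<and>
       0 < emeasure M (enlarge4 B) \<and> emeasure M (enlarge4 B) \<le> of_nat K * emeasure M B \<longrightarrow>
       of_nat (Suc k) * emeasure M (B - f -` ball (dd i) (1/real (Suc j))) \<le> emeasure M B)"
  shows "\<forall>B :: nat \<Rightarrow> 'a set.
           ((\<forall>n. B n \<in> sets borel) \<and> (\<lambda>n. diamE (B n)) \<longlonglongrightarrow> 0 \<and> (\<forall>n. p \<in> B n) \<and>
            (\<exists>C::real. C > 0 \<and> (\<forall>n. 0 < emeasure M (enlarge4 (B n)) \<and>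
                 emeasure M (enlarge4 (B n)) \<le> ennreal C * emeasure M (B n))))
           \<longrightarrow> (\<lambda>n. (\<integral>\<^sup>+ x\<in>B n. ennreal (dist (f p) (f x)) \<partial>M) / emeasure M (B n)) \<longlonglongrightarrow> 0"
proof (intro allI impI)
  fix B :: "nat \<Rightarrow> 'a set"
  assume "((\<forall>n. B n \<in> sets borel) \<and> (\<lambda>n. diamE (B n)) \<longlonglongrightarrow> 0 \<and> (\<forall>n. p \<in> B n) \<and>
            (\<exists>C::real. C > 0 \<and> (\<forall>n. 0 < emeasure M (enlarge4 (B n)) \<and>
                 emeasure M (enlarge4 (B n)) \<le> ennreal C * emeasure M (B n))))"
  then obtain C :: real where Bm: "\<And>n. B n \<in> sets borel" and Bd: "(\<lambda>n. diamE (B n)) \<longlonglongrightarrow> 0"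
    and pB: "\<And>n. p \<in> B n" and C: "C > 0" and B4: "\<And>n. 0 < emeasure M (enlarge4 (B n))"
    and BC: "\<And>n. emeasure M (enlarge4 (B n)) \<le> ennreal C * emeasure M (B n)"
    by blast
  have K0nn: "0 \<le> K0" using K0[of p p] by simp
  show "(\<lambda>n. (\<integral>\<^sup>+ x\<in>B n. ennreal (dist (f p) (f x)) \<partial>M) / emeasure M (B n)) \<longlonglongrightarrow> 0"
  proof (rule order_tendstoI)
    fix a :: ennreal assume "a < 0" then show "eventually (\<lambda>n. a < (\<integral>\<^sup>+ x\<in>B n. ennreal (dist (f p) (f x)) \<partial>M) / emeasure M (B n)) sequentially"
      by simp
  next
    fix a :: ennreal assume a: "0 < a"
    then obtain z where z: "0 < z" "z < a" using dense by blast
    define \<epsilon> where "\<epsilon> = enn2real z"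
    have ztop: "z < top" using z(2) top_greatest le_less_trans by (metis order_less_le_trans)
    have ez: "ennreal \<epsilon> = z" unfolding \<epsilon>_def using ztop by simp
    have e: "\<epsilon> > 0" unfolding \<epsilon>_def using z ztop by (simp add: enn2real_positive_iff)
    obtain j :: nat where j: "1/real (Suc j) < \<epsilon>/6" using nat_approx_posE[of "\<epsilon>/6"] e by auto
    define r2 where "r2 = 2/real (Suc j)"
    have r2: "r2 \<le> \<epsilon>/3" "0 \<le> r2" unfolding r2_def using j by (auto simp: field_simps)
    obtain k0 :: nat where k0: "3 * K0 / \<epsilon> < real k0" using reals_Archimedean2 by blast
    define k where "k = k0"
    have kK: "K0 / real (Suc k) \<le> \<epsilon>/3"
    proof -
      have "3 * K0 < \<epsilon> * real k0" using k0 e by (simp add: field_simps)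
      also have "\<dots> \<le> \<epsilon> * real (Suc k)" using e unfolding k_def by simp
      finally show ?thesis by (simp add: field_simps)
    qed
    obtain i where i: "dist (dd i) (f p) < 1/real (Suc j)" using dd[of "1/real (Suc j)" "f p"] by auto
    define Af where "Af = f -` ball (dd i) (1/real (Suc j))"
    have pA: "p \<in> Af" unfolding Af_def using i by simp
    have Afm': "Af \<in> sets borel" unfolding Af_def by (rule Afm)
    define K where "K = nat \<lceil>C\<rceil>"
    have CK: "ennreal C \<le> of_nat K"
    proof -
      have "C \<le> real K" unfolding K_def by linarith
      then have "ennreal C \<le> ennreal (real K)" by (intro ennreal_leI)
      then show ?thesis by (simp add: ennreal_of_nat_eq_real_of_nat)
    qed
    obtain \<delta> where \<delta>: "\<delta> > 0" and gd: "\<And>B'. B' \<in> sets borel \<and> p \<in> B' \<and> diamE B' < ennreal \<delta> \<and>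
       0 < emeasure M (enlarge4 B') \<and> emeasure M (enlarge4 B') \<le> of_nat K * emeasure M B' \<Longrightarrow>
       of_nat (Suc k) * emeasure M (B' - Af) \<le> emeasure M B'"
      using good[of i j K k] pA unfolding Af_def by blast
    obtain U where U: "open U" "p \<in> U" "emeasure M U < \<infinity>"
      using locfin unfolding locally_finite_measure_def by blast
    obtain \<rho> where \<rho>: "\<rho> > 0" "ball p \<rho> \<subseteq> U" using U openE by blast
    have "eventually (\<lambda>n. diamE (B n) < ennreal (min \<delta> \<rho>)) sequentially"
      using order_tendstoD(2)[OF Bd] \<delta> \<rho> by simp
    then show "eventually (\<lambda>n. (\<integral>\<^sup>+ x\<in>B n. ennreal (dist (f p) (f x)) \<partial>M) / emeasure M (B n) < a) sequentially"
    proof (rule eventually_mono)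
      fix n assume dn: "diamE (B n) < ennreal (min \<delta> \<rho>)"
      have d1: "diamE (B n) < ennreal \<delta>" using dn by (meson ennreal_leI min.cobounded1 order_less_le_trans)
      have d2: "diamE (B n) < ennreal \<rho>" using dn by (meson ennreal_leI min.cobounded2 order_less_le_trans)
      have "emeasure M (enlarge4 (B n)) \<le> of_nat K * emeasure M (B n)"
        using BC[of n] CK by (meson mult_right_mono order_trans zero_le)
      then have sk: "of_nat (Suc k) * emeasure M (B n - Af) \<le> emeasure M (B n)"
        using gd[of "B n"] Bm pB d1 B4 by blast
      have BU: "B n \<subseteq> U"
      proof
        fix x assume "x \<in> B n"
        then have "ennreal (dist p x) < ennreal \<rho>" using diamE_le[OF pB] d2 le_less_trans by blast
        then have "dist p x < \<rho>" by (simp add: ennreal_less_iff)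
        then show "x \<in> U" using \<rho> by auto
      qed
      have Bnm: "B n \<in> sets M" using Bm sM by simp
      have BAm: "B n - Af \<in> sets M" using Bm Afm' sM by auto
      have "emeasure M (B n) \<le> emeasure M U" using BU U sM by (intro emeasure_mono) auto
      then have fin: "emeasure M (B n) \<noteq> top" using U by (auto simp: top_unique)
      have fin2: "emeasure M (B n - Af) \<noteq> top"
        using fin BAm Bnm by (metis Diff_subset emeasure_mono top_unique)
      have pos: "emeasure M (B n) \<noteq> 0" using B4[of n] BC[of n] by (metis mult_zero_right not_less)
      define b where "b = measure M (B n)"
      define \<beta> where "\<beta> = measure M (B n - Af)"
      have eb: "emeasure M (B n) = ennreal b" unfolding b_def using fin by (rule emeasure_eq_ennreal_measure)
      have e\<beta>: "emeasure M (B n - Af) = ennreal \<beta>" unfolding \<beta>_def using fin2 by (rule emeasure_eq_ennreal_measure)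
      have b0: "b > 0" using pos eb unfolding b_def by (simp add: measure_nonneg zero_less_measure_iff)
      have \<beta>0: "\<beta> \<ge> 0" unfolding \<beta>_def by simp
      have "ennreal (real (Suc k) * \<beta>) \<le> ennreal b" using sk eb e\<beta> \<beta>0
        by (simp add: ennreal_mult ennreal_of_nat_eq_real_of_nat del: of_nat_Suc)
      then have sk': "real (Suc k) * \<beta> \<le> b" using b0 by simp
      have "(\<integral>\<^sup>+ x\<in>B n. ennreal (dist (f p) (f x)) \<partial>M) \<le>
            (\<integral>\<^sup>+ x. ennreal r2 * indicator (B n) x + ennreal K0 * indicator (B n - Af) x \<partial>M)"
      proof (intro nn_integral_mono)
        fix x
        show "ennreal (dist (f p) (f x)) * indicator (B n) x \<le> ennreal r2 * indicator (B n) x + ennreal K0 * indicator (B n - Af) x"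
        proof (cases "x \<in> B n")
          case False then show ?thesis by simp
        next
          case True
          show ?thesis
          proof (cases "x \<in> Af")
            case True
            then have "dist (dd i) (f x) < 1/real (Suc j)" unfolding Af_def by simp
            then have "dist (f p) (f x) \<le> r2" using i dist_triangle3[of "f p" "f x" "dd i"]
              unfolding r2_def by simp
            then show ?thesis using \<open>x \<in> B n\<close> True by (simp add: ennreal_leI)
          next
            case False
            have "dist (f p) (f x) \<le> K0" by (rule K0)
            then have "ennreal (dist (f p) (f x)) \<le> ennreal r2 + ennreal K0"
              by (metis add.commute add_increasing ennreal_leI zero_le)
            then show ?thesis using \<open>x \<in> B n\<close> False by simp
          qed
        qed
      qed
      also have "\<dots> = ennreal r2 * emeasure M (B n) + ennreal K0 * emeasure M (B n - Af)"
        using Bnm BAm by (simp add: nn_integral_add nn_integral_cmult_indicator)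
      also have "\<dots> = ennreal (r2 * b + K0 * \<beta>)"
        using eb e\<beta> r2 K0nn \<beta>0 b0 by (simp add: ennreal_mult ennreal_plus)
      also have "\<dots> \<le> ennreal ((2*\<epsilon>/3) * b)"
      proof (intro ennreal_leI)
        have "K0 * \<beta> \<le> K0 * (b / real (Suc k))" using sk' K0nn
          by (intro mult_left_mono) (simp_all add: field_simps)
        also have "\<dots> = (K0 / real (Suc k)) * b" by simp
        also have "\<dots> \<le> (\<epsilon>/3) * b" using kK b0 by (intro mult_right_mono) auto
        finally have "K0 * \<beta> \<le> (\<epsilon>/3) * b" .
        moreover have "r2 * b \<le> (\<epsilon>/3) * b" using r2 b0 by (intro mult_right_mono) auto
        ultimately show "r2 * b + K0 * \<beta> \<le> (2*\<epsilon>/3) * b" by simp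
      qed
      finally have I: "(\<integral>\<^sup>+ x\<in>B n. ennreal (dist (f p) (f x)) \<partial>M) \<le> ennreal ((2*\<epsilon>/3) * b)" .
      have "(\<integral>\<^sup>+ x\<in>B n. ennreal (dist (f p) (f x)) \<partial>M) / emeasure M (B n) \<le> ennreal ((2*\<epsilon>/3) * b) / ennreal b"
        unfolding eb by (rule divide_right_mono_ennreal[OF I])
      also have "\<dots> = ennreal (2*\<epsilon>/3)" using b0 e by (simp add: divide_ennreal)
      also have "\<dots> < ennreal \<epsilon>" using e by (simp add: ennreal_less_iff)
      also have "\<dots> < a" using ez z by simp
      finally show "(\<integral>\<^sup>+ x\<in>B n. ennreal (dist (f p) (f x)) \<partial>M) / emeasure M (B n) < a" .
    qed
  qed
qed


theorem mainTheorem9: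
  fixes M :: "'a::{metric_space, second_countable_topology} measure"
    and f :: "'a \<Rightarrow> 'b::{metric_space, second_countable_topology}"
  assumes borelM: "sets M = sets borel"
    and locfin: "locally_finite_measure M"
    and fmeas: "f \<in> borel_measurable borel"
    and fbdd: "bounded (range f)"
  shows "AE p in M. \<forall>B :: nat \<Rightarrow> 'a set.
           ((\<forall>n. B n \<in> sets borel) \<and> (\<lambda>n. diamE (B n)) \<longlonglongrightarrow> 0 \<and> (\<forall>n. p \<in> B n) \<and>
            (\<exists>C::real. C > 0 \<and> (\<forall>n. 0 < emeasure M (enlarge4 (B n)) \<and>
                 emeasure M (enlarge4 (B n)) \<le> ennreal C * emeasure M (B n))))
           \<longrightarrow> (\<lambda>n. (\<integral>\<^sup>+ x\<in>B n. ennreal (dist (f p) (f x)) \<partial>M) / emeasure M (B n)) \<longlonglongrightarrow> 0"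
proof -
  obtain D :: "'b set" where D: "countable D" "\<And>X. open X \<Longrightarrow> X \<noteq> {} \<Longrightarrow> \<exists>d\<in>D. d \<in> X"
    using countable_dense_setE by blast
  have Dne: "D \<noteq> {}" using D(2)[of UNIV] by auto
  define dd where "dd = from_nat_into D"
  have dd: "\<exists>i. dist (dd i) y < r" if "r > 0" for y r
  proof -
    have "ball y r \<noteq> {}" using that by simp
    then obtain d where d: "d \<in> D" "d \<in> ball y r" using D(2)[of "ball y r"] by blast
    then obtain i where "dd i = d" using range_from_nat_into[OF Dne D(1)] unfolding dd_def
      by (metis rangeE)
    then show ?thesis using d by (auto simp: dist_commute)
  qed
  obtain K0 where K0: "\<And>x y. dist (f x) (f y) \<le> K0" using fbdd unfolding bounded_two_points by auto
  have Afm: "f -` ball (dd i) (1/real (Suc j)) \<in> sets borel" for j i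
    using measurable_sets[OF fmeas, of "ball (dd i) (1/real (Suc j))"] by simp
  have "AE p in M. \<forall>j i K k. p \<in> f -` ball (dd i) (1/real (Suc j)) \<longrightarrow> (\<exists>\<delta>>0. \<forall>B. B \<in> sets borel \<and> p \<in> B \<and> diamE B < ennreal \<delta> \<and>
       0 < emeasure M (enlarge4 B) \<and> emeasure M (enlarge4 B) \<le> of_nat K * emeasure M B \<longrightarrow>
       of_nat (Suc k) * emeasure M (B - f -` ball (dd i) (1/real (Suc j))) \<le> emeasure M B)"
    unfolding AE_all_countable using density[OF borelM locfin Afm] by blast
  then show ?thesis
  proof (rule eventually_mono)
    fix p assume "\<forall>j i K k. p \<in> f -` ball (dd i) (1/real (Suc j)) \<longrightarrow> (\<exists>\<delta>>0. \<forall>B. B \<in> sets borel \<and> p \<in> B \<and> diamE B < ennreal \<delta> \<and>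
       0 < emeasure M (enlarge4 B) \<and> emeasure M (enlarge4 B) \<le> of_nat K * emeasure M B \<longrightarrow>
       of_nat (Suc k) * emeasure M (B - f -` ball (dd i) (1/real (Suc j))) \<le> emeasure M B)"
    then show "\<forall>B :: nat \<Rightarrow> 'a set.
           ((\<forall>n. B n \<in> sets borel) \<and> (\<lambda>n. diamE (B n)) \<longlonglongrightarrow> 0 \<and> (\<forall>n. p \<in> B n) \<and>
            (\<exists>C::real. C > 0 \<and> (\<forall>n. 0 < emeasure M (enlarge4 (B n)) \<and>
                 emeasure M (enlarge4 (B n)) \<le> ennreal C * emeasure M (B n))))
           \<longrightarrow> (\<lambda>n. (\<integral>\<^sup>+ x\<in>B n. ennreal (dist (f p) (f x)) \<partial>M) / emeasure M (B n)) \<longlonglongrightarrow> 0"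
      by (intro pointwise[OF borelM locfin K0 dd Afm]) blast+
  qed
qed

end
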